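(* Let $p$ be an odd prime, $i$ an integer with $1\leq i\leq p-1$, and $k\geq1$ an integer. Then for every integer $l\geq k$, $v_p\left(\frac{k!}{l!}{l \brace k}_{\leq i}\right)\geq 0$.
   Context: For integers $N\geq k\geq0$ and $r\ge1$, the $r$-restricted Stirling number of the second kind ${N \brace k}_{\leq r}$ is $\sum \frac{N!}{\prod_{m=1}^r j_m!(m!)^{j_m}}$ over $(j_1,\dots,j_r)\in\mathbb{N}^r$ with $\sum j_m=k$, $\sum m j_m=N$; equivalently the number of partitions of an $N$-element set into $k$ nonempty blocks of size at most $r$. $v_p$ is the $p$-adic valuation on $\mathbb{Q}$ (with $v_p(0)=+\infty$). *)

theory Defs
  imports "HOL-Computational_Algebra.Computational_Algebra" "HOL-Library.Extended_Real"
begin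

definition padic_val_rat :: "nat \<Rightarrow> rat \<Rightarrow> ereal" where
  "padic_val_rat p q =
     (if q = 0 then \<infinity>
      else ereal (of_int (int (multiplicity (int p) (fst (quotient_of q)))
                     - int (multiplicity (int p) (snd (quotient_of q))))))"

text \<open>Admissible tuples (j_1,...,j_r), encoded as functions nat => nat vanishing outside {1..r}.\<close>
definition rstir_tuples :: "nat \<Rightarrow> nat \<Rightarrow> nat \<Rightarrow> (nat \<Rightarrow> nat) set" where
  "rstir_tuples r N k = {j. (\<forall>m. m \<notin> {1..r} \<longrightarrow> j m = 0)
                          \<and> (\<Sum>m=1..r. j m) = k \<and> (\<Sum>m=1..r. m * j m) = N}"

definition restricted_stirling :: "nat \<Rightarrow> nat \<Rightarrow> nat \<Rightarrow> rat" where
  "restricted_stirling N k r =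
     (\<Sum>j\<in>rstir_tuples r N k. fact N / (\<Prod>m=1..r. fact (j m) * (fact m) ^ (j m)))"

end

theory Submission
  imports Defs
begin

definition pint :: "nat \<Rightarrow> rat \<Rightarrow> bool" where
  "pint p q \<longleftrightarrow> (\<exists>b::int. b \<noteq> 0 \<and> \<not> int p dvd b \<and> of_int b * q \<in> \<int>)"

lemma pint_0: "p \<noteq> 1 \<Longrightarrow> pint p 0"
  unfolding pint_def by (rule exI[of _ 1]) auto

lemma pint_add:
  assumes "prime p" "pint p x" "pint p y" shows "pint p (x + y)"
proof -
  obtain a where a: "a \<noteq> 0" "\<not> int p dvd a" "of_int a * x \<in> \<int>" using assms(2) pint_def by auto
  obtain b where b: "b \<noteq> 0" "\<not> int p dvd b" "of_int b * y \<in> \<int>" using assms(3) pint_def by auto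
  have pp: "prime (int p)" using assms(1) by simp
  have "\<not> int p dvd a * b" using a b pp by (simp add: prime_dvd_mult_iff)
  moreover have "of_int (a*b) * (x + y) = of_int b * (of_int a * x) + of_int a * (of_int b * y)"
    by (simp add: algebra_simps)
  moreover have "\<dots> \<in> \<int>" using a(3) b(3) by (meson Ints_add Ints_mult Ints_of_int)
  ultimately show ?thesis unfolding pint_def using a b
    by (metis mult_eq_0_iff)
qed

lemma pint_sum:
  assumes "prime p" "\<And>x. x \<in> A \<Longrightarrow> pint p (f x)" shows "pint p (sum f A)"
proof (cases "finite A")
  case True
  then show ?thesis using assms(2)
  proof (induction A rule: finite_induct)
    case empty then show ?case using pint_0[of p] assms(1) prime_gt_1_nat[of p] by simp
  next
    case (insert x F) then show ?case using pint_add[OF assms(1)] by simp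
  qed
next
  case False then show ?thesis using pint_0[of p] assms(1) prime_gt_1_nat[of p] by simp
qed

lemma pint_val:
  assumes "prime p" "pint p q" shows "padic_val_rat p q \<ge> 0"
proof (cases "q = 0")
  case True then show ?thesis by (simp add: padic_val_rat_def)
next
  case False
  obtain n d where nd: "quotient_of q = (n, d)" by (cases "quotient_of q")
  have d: "d > 0" using quotient_of_denom_pos[OF nd] .
  have cop: "coprime n d" using quotient_of_coprime[OF nd] .
  have q: "q = of_int n / of_int d" using quotient_of_div[OF nd] .
  obtain b where b: "b \<noteq> 0" "\<not> int p dvd b" "of_int b * q \<in> \<int>" using assms(2) pint_def by auto
  then obtain z where z: "of_int b * q = of_int z" by (auto elim: Ints_cases)
  hence "of_int b * of_int n = (of_int z * of_int d :: rat)" using q d by (simp add: field_simps)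
  hence "b * n = z * d" by (metis of_int_eq_iff of_int_mult)
  hence "d dvd b * n" by (metis dvd_triv_right)
  hence "d dvd b" using cop by (metis coprime_commute coprime_dvd_mult_left_iff)
  hence "\<not> int p dvd d" using b by (meson dvd_trans)
  hence "multiplicity (int p) d = 0" by (rule not_dvd_imp_multiplicity_0)
  then show ?thesis using False nd by (simp add: padic_val_rat_def)
qed

lemma prod_fact_dvd:
  assumes "finite S" shows "(\<Prod>m\<in>S. fact (j m) :: nat) dvd fact (\<Sum>m\<in>S. j m)"
  using assms
proof (induction S rule: finite_induct)
  case empty then show ?case by simp
next
  case (insert x F)
  have "fact (j x) * (\<Prod>m\<in>F. fact (j m)) dvd fact (j x) * (fact (\<Sum>m\<in>F. j m) :: nat)"
    using insert by (simp add: mult_dvd_mono)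
  also have "\<dots> dvd fact (j x + (\<Sum>m\<in>F. j m))" by (rule fact_fact_dvd_fact)
  finally show ?case using insert by simp
qed

lemma term_pint:
  fixes p i k :: nat and j :: "nat \<Rightarrow> nat"
  assumes "prime p" "i \<le> p - 1" "(\<Sum>m=1..i. j m) = k"
  shows "pint p (fact k / (\<Prod>m=1..i. fact (j m) * (fact m) ^ (j m)))"
proof -
  have dv: "(\<Prod>m=1..i. fact (j m) :: nat) dvd fact k"
    using prod_fact_dvd[of "{1..i}" j] assms(3) by simp
  then obtain c where c: "fact k = (\<Prod>m=1..i. fact (j m) :: nat) * c" by (auto elim: dvdE)
  define B :: nat where "B = (\<Prod>m=1..i. (fact m) ^ (j m))"
  have pp: "prime (int p)" using assms(1) by simp
  have nd: "\<not> int p dvd int B"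
  proof -
    have "\<not> p dvd B" unfolding B_def
    proof
      assume "p dvd (\<Prod>m=1..i. (fact m :: nat) ^ (j m))"
      then obtain m where m: "m \<in> {1..i}" "p dvd (fact m :: nat) ^ (j m)"
        using prime_dvd_prod_iff[OF finite_atLeastAtMost assms(1), of "\<lambda>m. (fact m :: nat) ^ j m" 1 i] by blast
      hence "p dvd (fact m :: nat)" using assms(1) prime_dvd_power by blast
      hence "p \<le> m" using prime_dvd_fact_iff[OF assms(1)] by simp
      thus False using m assms(2) prime_gt_1_nat[OF assms(1)] by auto
    qed
    thus ?thesis by simp
  qed
  have B0: "B \<noteq> 0" unfolding B_def by simp
  have P0: "(\<Prod>m=1..i. fact (j m) :: rat) \<noteq> 0" by simp
  have "(fact k :: rat) / (\<Prod>m=1..i. fact (j m) * (fact m) ^ (j m))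
      = (fact k / (\<Prod>m=1..i. fact (j m))) / of_nat B"
    unfolding B_def by (simp add: prod.distrib of_nat_prod)
  also have "fact k / (\<Prod>m=1..i. fact (j m)) = (of_nat c :: rat)"
  proof -
    have "(fact k :: rat) = of_nat (fact k)" by simp
    also have "\<dots> = (\<Prod>m=1..i. fact (j m)) * of_nat c" by (simp add: c of_nat_prod)
    finally show ?thesis using P0 by simp
  qed
  finally have eq: "(fact k :: rat) / (\<Prod>m=1..i. fact (j m) * (fact m) ^ (j m)) = of_nat c / of_nat B" .
  show ?thesis unfolding pint_def eq
    by (rule exI[of _ "int B"]) (use nd B0 in simp)
qed

theorem lemma3p13:
  fixes p i k l :: nat
  assumes "prime p" and "odd p" and "1 \<le> i" and "i \<le> p - 1" and "1 \<le> k" and "k \<le> l"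
  shows "padic_val_rat p (fact k / fact l * restricted_stirling l k i) \<ge> 0"
proof -
  have "fact k / fact l * restricted_stirling l k i
      = (\<Sum>j\<in>rstir_tuples i l k. fact k / (\<Prod>m=1..i. fact (j m) * (fact m) ^ (j m)))"
    unfolding restricted_stirling_def sum_distrib_left by (rule sum.cong) auto
  moreover have "pint p \<dots>"
    by (rule pint_sum[OF assms(1)], rule term_pint[OF assms(1) assms(4)])
       (auto simp: rstir_tuples_def)
  ultimately show ?thesis using pint_val[OF assms(1)] by simp
qed

end
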